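(* Let $X$ be a compact metric space and $f\colon X\to X$ continuous. Then $(X,f)$ has property $P_e$ if and only if $(X,f)$ has $\gamma$-restricted two-sided orbital limit shadowing.
   Context: A full trajectory is a sequence $\langle x_i\rangle_{i\in\mathbb Z}$ in $X$ with $f(x_i)=x_{i+1}$ for all $i\in\mathbb Z$. For a two-sided sequence $\langle x_i\rangle_{i\in\mathbb Z}$ in $X$, $\omega(\langle x_i\rangle)=\bigcap_{M\in\mathbb N}\overline{\{x_n: n>M\}}$ and $\alpha(\langle x_i\rangle)=\bigcap_{M\in\mathbb N}\overline{\{x_n: n<-M\}}$. A set $A\subseteq X$ is internally chain transitive if for all $a,b\in A$ and every $\delta>0$ there is a finite sequence $x_0=a,x_1,\dots,x_N=b$ in $A$ with $N\ge1$ and $d(f(x_i),x_{i+1})<\delta$ for all $i<N$; $ICT_f$ denotes the set of nonempty closed internally chain transitive subsets of $X$. Property $P_e$: for every $A\in ICT_f$ there is a full trajectory $\langle x_i\rangle_{i\in\mathbb Z}$ with $\alpha(\langle x_i\rangle)=\omega(\langle x_i\rangle)=A$. A two-sided asymptotic pseudo-orbit is a sequence $\langle x_i\rangle_{i\in\mathbb Z}$ with $d(f(x_i),x_{i+1})\to0$ as $i\to\pm\infty$. $(X,f)$ has $\gamma$-restricted two-sided orbital limit shadowing if for every two-sided asymptotic pseudo-orbit $\langle x_i\rangle_{i\in\mathbb Z}$ with $\alpha(\langle x_i\rangle)=\omega(\langle x_i\rangle)$ there is a full trajectory $\langle z_i\rangle_{i\in\mathbb Z}$ with $\alpha(\langle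 z_i\rangle)=\alpha(\langle x_i\rangle)$ and $\omega(\langle z_i\rangle)=\omega(\langle x_i\rangle)$. *)

theory Defs
  imports "HOL-Analysis.Analysis"
begin

text \<open>The phase space X is modelled as a set S in a metric space type; f maps S into S.\<close>

definition full_trajectory :: "'a set \<Rightarrow> ('a \<Rightarrow> 'a) \<Rightarrow> (int \<Rightarrow> 'a) \<Rightarrow> bool" where
  "full_trajectory S f x \<longleftrightarrow> (\<forall>i. x i \<in> S) \<and> (\<forall>i. f (x i) = x (i + 1))"

definition omega_set :: "(int \<Rightarrow> 'a::metric_space) \<Rightarrow> 'a set" where
  "omega_set x = (\<Inter>M::nat. closure {x n | n. n > int M})"

definition alpha_set :: "(int \<Rightarrow> 'a::metric_space) \<Rightarrow> 'a set" where
  "alpha_set x = (\<Inter>M::nat. closure {x n | n. n < - int M})"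

definition internally_chain_transitive :: "('a::metric_space \<Rightarrow> 'a) \<Rightarrow> 'a set \<Rightarrow> bool" where
  "internally_chain_transitive f A \<longleftrightarrow>
     (\<forall>a\<in>A. \<forall>b\<in>A. \<forall>\<delta>>0. \<exists>N::nat. \<exists>y::nat \<Rightarrow> 'a. N \<ge> 1 \<and> y 0 = a \<and> y N = b \<and>
        (\<forall>i\<le>N. y i \<in> A) \<and> (\<forall>i<N. dist (f (y i)) (y (Suc i)) < \<delta>))"

definition ICT :: "'a set \<Rightarrow> ('a::metric_space \<Rightarrow> 'a) \<Rightarrow> 'a set set" where
  "ICT S f = {A. A \<subseteq> S \<and> A \<noteq> {} \<and> closed A \<and> internally_chain_transitive f A}"

definition property_Pe :: "'a set \<Rightarrow> ('a::metric_space \<Rightarrow> 'a) \<Rightarrow> bool" where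
  "property_Pe S f \<longleftrightarrow> (\<forall>A\<in>ICT S f. \<exists>x. full_trajectory S f x \<and> alpha_set x = A \<and> omega_set x = A)"

definition two_sided_asymptotic_pseudo_orbit :: "'a set \<Rightarrow> ('a::metric_space \<Rightarrow> 'a) \<Rightarrow> (int \<Rightarrow> 'a) \<Rightarrow> bool" where
  "two_sided_asymptotic_pseudo_orbit S f x \<longleftrightarrow> (\<forall>i. x i \<in> S) \<and>
     ((\<lambda>i. dist (f (x i)) (x (i + 1))) \<longlongrightarrow> 0) at_top \<and>
     ((\<lambda>i. dist (f (x i)) (x (i + 1))) \<longlongrightarrow> 0) at_bot"

definition gamma_restricted_two_sided_orbital_limit_shadowing :: "'a set \<Rightarrow> ('a::metric_space \<Rightarrow> 'a) \<Rightarrow> bool" where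
  "gamma_restricted_two_sided_orbital_limit_shadowing S f \<longleftrightarrow>
     (\<forall>x. two_sided_asymptotic_pseudo_orbit S f x \<and> alpha_set x = omega_set x \<longrightarrow>
        (\<exists>z. full_trajectory S f z \<and> alpha_set z = alpha_set x \<and> omega_set z = omega_set x))"

end

theory Submission
  imports Defs
begin

lemma concat_chains:
  fixes E :: "'a \<Rightarrow> 'a \<Rightarrow> real" and c :: "nat \<Rightarrow> nat \<Rightarrow> 'a" and N :: "nat \<Rightarrow> nat"
  assumes N1: "\<forall>k. N k \<ge> 1" and link: "\<forall>k. c k (N k) = c (Suc k) 0"
    and err: "\<forall>k. \<forall>i<N k. E (c k i) (c k (Suc i)) < 1 / (real k + 1)"
    and inA: "\<forall>k. \<forall>i\<le>N k. c k i \<in> A"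
  shows "\<exists>p. (\<forall>n. p n \<in> A) \<and> (\<forall>\<epsilon>>0. \<exists>n0. \<forall>n\<ge>n0. E (p n) (p (Suc n)) < \<epsilon>)
            \<and> (\<forall>k. \<exists>n\<ge>k. p n = c k 0)"
proof -
  define st where "st = (\<lambda>(k, j). if Suc j < N k then (k, Suc j) else (Suc k, 0::nat))"
  define pos where "pos n = (st ^^ n) (0, 0)" for n
  have pos0: "pos 0 = (0, 0)" by (simp add: pos_def)
  have posS: "pos (Suc n) = st (pos n)" for n by (simp add: pos_def)
  define p where "p n = c (fst (pos n)) (snd (pos n))" for n
  have inv: "snd (pos n) < N (fst (pos n))" for n
  proof (induction n)
    case 0 then show ?case using N1 by (simp add: pos0) (metis One_nat_def less_eq_Suc_le)
  next
    case (Suc n)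
    then show ?case using N1 by (cases "pos n") (auto simp: posS st_def Suc_le_eq)
  qed
  have step: "E (p n) (p (Suc n)) < 1 / (real (fst (pos n)) + 1)" for n
  proof (cases "pos n")
    case (Pair k j)
    have jk: "j < N k" using inv[of n] Pair by simp
    show ?thesis
    proof (cases "Suc j < N k")
      case True
      then have "pos (Suc n) = (k, Suc j)" using Pair by (simp add: posS st_def)
      then show ?thesis using err jk Pair by (simp add: p_def)
    next
      case False
      then have "pos (Suc n) = (Suc k, 0)" using Pair by (simp add: posS st_def)
      moreover have "Suc j = N k" using False jk by simp
      moreover have "c (Suc k) 0 = c k (Suc j)" using link \<open>Suc j = N k\<close> by simp
      moreover have "E (c k j) (c k (Suc j)) < 1 / (real k + 1)" using err jk by blast
      ultimately show ?thesis using Pair by (simp add: p_def)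
    qed
  qed
  have mono: "fst (pos n) \<le> fst (pos (Suc n))" for n
    by (cases "pos n") (auto simp: posS st_def)
  have monoS: "m \<le> n \<Longrightarrow> fst (pos m) \<le> fst (pos n)" for m n
    by (induction n rule: dec_induct) (auto intro: order_trans mono)
  have blk: "pos n = (k, 0) \<Longrightarrow> j < N k \<Longrightarrow> pos (n + j) = (k, j)" for n k j
    by (induction j) (auto simp: posS st_def)
  have blk2: "pos n = (k, 0) \<Longrightarrow> pos (n + N k) = (Suc k, 0)" for n k
  proof -
    assume a: "pos n = (k, 0)"
    obtain m where m: "N k = Suc m" using N1 by (metis Suc_le_D One_nat_def)
    have "pos (n + m) = (k, m)" using blk[OF a, of m] m by simp
    then show ?thesis using m by (simp add: posS st_def)
  qed
  have start: "\<exists>n\<ge>k. pos n = (k, 0)" for k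
  proof (induction k)
    case 0 then show ?case using pos0 by auto
  next
    case (Suc k)
    then obtain n where "n \<ge> k" "pos n = (k, 0)" by blast
    moreover have "Suc k \<le> n + N k" using \<open>n \<ge> k\<close> N1[rule_format, of k] by linarith
    ultimately show ?case using blk2[of n k] by blast
  qed
  show ?thesis
  proof (intro exI[of _ p] conjI allI impI)
    fix n show "p n \<in> A" using inA inv[of n] by (simp add: p_def less_imp_le)
  next
    fix \<epsilon> :: real assume e: "\<epsilon> > 0"
    obtain K :: nat where K: "1 / (real K + 1) < \<epsilon>"
      using e by (metis add.commute add_cancel_left_left add_strict_increasing2 less_numeral_extra(1) nat_approx_posE of_nat_Suc of_nat_0_le_iff less_imp_le)
    obtain n0 where n0: "pos n0 = (K, 0)" using start by blast
    show "\<exists>n0. \<forall>n\<ge>n0. E (p n) (p (Suc n)) < \<epsilon>"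
    proof (intro exI[of _ n0] allI impI)
      fix n assume "n \<ge> n0"
      then have "K \<le> fst (pos n)" using monoS n0 by fastforce
      then have "1 / (real (fst (pos n)) + 1) \<le> 1 / (real K + 1)"
        by (simp add: frac_le)
      then show "E (p n) (p (Suc n)) < \<epsilon>" using step[of n] K by linarith
    qed
  next
    fix k show "\<exists>n\<ge>k. p n = c k 0" using start[of k] by (auto simp: p_def)
  qed
qed


definition om :: "(nat \<Rightarrow> 'a::metric_space) \<Rightarrow> 'a set" where
  "om u = (\<Inter>M::nat. closure {u n | n. n > M})"

lemma omega_om: "omega_set x = om (\<lambda>n. x (int n))"
proof -
  have "{x n | n. n > int M} = {x (int n) | n. n > M}" for M
  proof (intro set_eqI iffI)
    fix y assume "y \<in> {x n | n. n > int M}"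
    then obtain n where "n > int M" "y = x n" by blast
    then show "y \<in> {x (int n) | n. n > M}" by (intro CollectI exI[of _ "nat n"]) auto
  qed auto
  then show ?thesis by (simp add: omega_set_def om_def)
qed

lemma subseq_in_om:
  assumes "strict_mono r" "(u \<circ> r) \<longlonglongrightarrow> l"
  shows "l \<in> om u"
  unfolding om_def
proof
  fix M :: nat
  have "eventually (\<lambda>k. (u \<circ> r) k \<in> closure {u n | n. n > M}) sequentially"
    unfolding eventually_sequentially
  proof (intro exI[of _ "Suc M"] allI impI)
    fix k assume "Suc M \<le> k"
    then have "r k > M" using seq_suble[OF assms(1), of k] by simp
    then show "(u \<circ> r) k \<in> closure {u n | n. n > M}" by (auto intro: closure_subset[THEN subsetD])
  qed
  then show "l \<in> closure {u n | n. n > M}"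
    using Lim_in_closed_set[OF closed_closure _ _ assms(2)] by simp
qed

lemma om_sub:
  assumes "closed S" "\<forall>n. u n \<in> S" shows "om u \<subseteq> S"
proof -
  have "closure {u n | n. n > 0} \<subseteq> S" using assms by (intro closure_minimal) auto
  then show ?thesis unfolding om_def by blast
qed

lemma om_nonempty:
  assumes "compact S" "\<forall>n. u n \<in> S" shows "om u \<noteq> {}"
  using assms subseq_in_om unfolding compact_def by blast

lemma om_closed: "closed (om u)" unfolding om_def by auto

lemma om_approx:
  assumes "compact S" "\<forall>n. u n \<in> S" "\<eta> > 0"
  shows "\<exists>M. \<forall>n>M. \<exists>y\<in>om u. dist (u n) y < \<eta>"
proof (rule ccontr)
  assume "\<not> ?thesis"
  then have H: "\<forall>M. \<exists>n>M. \<forall>y\<in>om u. dist (u n) y \<ge> \<eta>" by (auto simp: not_less)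
  define g where "g M = (SOME n. n > M \<and> (\<forall>y\<in>om u. dist (u n) y \<ge> \<eta>))" for M
  have g: "g M > M \<and> (\<forall>y\<in>om u. dist (u (g M)) y \<ge> \<eta>)" for M
    unfolding g_def by (rule someI_ex) (use H in blast)
  define r where "r k = (g ^^ Suc k) 0" for k
  have rS: "r (Suc k) = g (r k)" for k by (simp add: r_def)
  have "strict_mono r" by (rule strict_monoI_Suc) (simp add: rS g)
  have far: "\<forall>y\<in>om u. dist (u (r k)) y \<ge> \<eta>" for k by (simp add: r_def g)
  obtain l h where l: "l \<in> S" "strict_mono h" "((u \<circ> r) \<circ> h) \<longlonglongrightarrow> l"
    using assms(1,2) unfolding compact_def by (metis comp_apply)
  have "strict_mono (r \<circ> h)" using \<open>strict_mono r\<close> l(2) by (simp add: strict_mono_o)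
  then have "l \<in> om u" using subseq_in_om l(3) by (metis comp_assoc)
  then have "\<forall>k. dist (u (r (h k))) l \<ge> \<eta>" using far by blast
  moreover have "eventually (\<lambda>k. dist (((u \<circ> r) \<circ> h) k) l < \<eta>) sequentially"
    using l(3) assms(3) tendsto_iff by blast
  ultimately show False by (simp add: eventually_sequentially) (meson not_le order.refl)
qed

lemma om_ict:
  assumes "compact S" "continuous_on S f" "\<forall>n. u n \<in> S"
    and pso: "\<forall>e>0. \<exists>M. \<forall>n\<ge>M. dist (f (u n)) (u (Suc n)) < e"
  shows "internally_chain_transitive f (om u)"
  unfolding internally_chain_transitive_def
proof (intro ballI allI impI)
  fix a b and \<delta> :: real assume a: "a \<in> om u" and b: "b \<in> om u" and d: "\<delta> > 0"
  let ?L = "om u"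
  have LS: "?L \<subseteq> S" using om_sub[OF compact_imp_closed[OF assms(1)] assms(3)] .
  have "uniformly_continuous_on S f" using compact_uniformly_continuous[OF assms(2,1)] .
  then obtain d where d0: "d > 0" and dd: "\<forall>x\<in>S. \<forall>x'\<in>S. dist x' x < d \<longrightarrow> dist (f x') (f x) < \<delta>/3"
    using \<open>uniformly_continuous_on S f\<close>[unfolded uniformly_continuous_on_def, rule_format, of "\<delta>/3"] d by auto
  define \<eta> where "\<eta> = min d (\<delta>/3)"
  have eta: "\<eta> > 0" "\<eta> \<le> d" "\<eta> \<le> \<delta>/3" using d0 d by (auto simp: \<eta>_def)
  obtain M1 where M1: "\<forall>n\<ge>M1. dist (f (u n)) (u (Suc n)) < \<eta>" using pso eta by blast
  obtain M2 where M2: "\<forall>n>M2. \<exists>y\<in>?L. dist (u n) y < \<eta>" using om_approx[OF assms(1,3) eta(1)] by blast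
  have "\<forall>n. \<exists>y. M2 < n \<longrightarrow> y \<in> ?L \<and> dist (u n) y < \<eta>" using M2 by blast
  then obtain Y where Y: "\<forall>n>M2. Y n \<in> ?L \<and> dist (u n) (Y n) < \<eta>" using choice[of "\<lambda>n y. M2 < n \<longrightarrow> y \<in> ?L \<and> dist (u n) y < \<eta>"] by blast
  have "a \<in> closure {u n | n. n > max M1 M2}" using a unfolding om_def by blast
  then obtain n1 where n1: "n1 > max M1 M2" "dist (u n1) a < \<eta>"
    unfolding closure_approachable using eta by blast
  have "b \<in> closure {u n | n. n > n1}" using b unfolding om_def by blast
  then obtain n2 where n2: "n2 > n1" "dist (u n2) b < \<eta>"
    unfolding closure_approachable using eta by blast
  define N where "N = n2 - n1"
  define y where "y i = (if i = 0 then a else if i = N then b else Y (n1 + i))" for i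
  have N1: "N \<ge> 1" using n2 by (simp add: N_def)
  have yL: "y i \<in> ?L \<and> dist (u (n1 + i)) (y i) < \<eta>" if "i \<le> N" for i
    using that n1 n2 Y a b by (auto simp: y_def N_def)
  show "\<exists>N y. 1 \<le> N \<and> y 0 = a \<and> y N = b \<and> (\<forall>i\<le>N. y i \<in> ?L) \<and> (\<forall>i<N. dist (f (y i)) (y (Suc i)) < \<delta>)"
  proof (intro exI[of _ N] exI[of _ y] conjI allI impI N1)
    show "y 0 = a" by (simp add: y_def)
    show "y N = b" using N1 by (simp add: y_def)
    show "y i \<in> ?L" if "i \<le> N" for i using yL that by blast
  next
    fix i assume i: "i < N"
    have y1: "y i \<in> S" "dist (u (n1 + i)) (y i) < \<eta>" using yL[of i] i LS by auto
    have y2: "dist (u (n1 + Suc i)) (y (Suc i)) < \<eta>" using yL[of "Suc i"] i by auto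
    have uS: "u (n1 + i) \<in> S" using assms by blast
    have "dist (f (y i)) (f (u (n1 + i))) < \<delta>/3"
    proof -
      have "dist (y i) (u (n1 + i)) < d" using y1(2) eta(2) by (simp add: dist_commute)
      then show ?thesis using dd uS y1(1) by blast
    qed
    moreover have "dist (f (u (n1 + i))) (u (Suc (n1 + i))) < \<eta>" using M1 n1 by auto
    moreover have "dist (f (y i)) (y (Suc i)) \<le> dist (f (y i)) (f (u (n1 + i)))
        + dist (f (u (n1 + i))) (u (Suc (n1 + i))) + dist (u (n1 + Suc i)) (y (Suc i))"
      using dist_triangle[of "f (y i)" "y (Suc i)" "f (u (n1 + i))"]
        dist_triangle[of "f (u (n1 + i))" "y (Suc i)" "u (Suc (n1 + i))"] by simp
    ultimately show "dist (f (y i)) (y (Suc i)) < \<delta>" using y2 eta by linarith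
  qed
qed


lemma dir1:
  fixes S :: "'a::metric_space set" and f :: "'a \<Rightarrow> 'a"
  assumes "compact S" and "continuous_on S f" and "f ` S \<subseteq> S"
    and Pe: "property_Pe S f"
  shows "gamma_restricted_two_sided_orbital_limit_shadowing S f"
  unfolding gamma_restricted_two_sided_orbital_limit_shadowing_def
proof (intro allI impI)
  fix x assume H: "two_sided_asymptotic_pseudo_orbit S f x \<and> alpha_set x = omega_set x"
  define u where "u n = x (int n)" for n
  have xS: "\<forall>i. x i \<in> S" using H by (simp add: two_sided_asymptotic_pseudo_orbit_def)
  then have uS: "\<forall>n. u n \<in> S" by (simp add: u_def)
  have lim: "((\<lambda>i. dist (f (x i)) (x (i + 1))) \<longlongrightarrow> 0) at_top"
    using H by (simp add: two_sided_asymptotic_pseudo_orbit_def)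
  have pso: "\<forall>e>0. \<exists>M. \<forall>n\<ge>M. dist (f (u n)) (u (Suc n)) < e"
  proof (intro allI impI)
    fix e :: real assume e: "e > 0"
    have "eventually (\<lambda>i. dist (dist (f (x i)) (x (i + 1))) 0 < e) at_top"
      using tendsto_iff[THEN iffD1, OF lim, rule_format, OF e] by simp
    then obtain I where I: "\<forall>i\<ge>I. dist (dist (f (x i)) (x (i + 1))) 0 < e"
      unfolding eventually_at_top_linorder by blast
    show "\<exists>M. \<forall>n\<ge>M. dist (f (u n)) (u (Suc n)) < e"
    proof (intro exI[of _ "nat I"] allI impI)
      fix n assume "nat I \<le> n"
      then have "int n \<ge> I" by linarith
      then have "dist (dist (f (x (int n))) (x (int n + 1))) 0 < e" using I by blast
      then show "dist (f (u n)) (u (Suc n)) < e" by (simp add: u_def add.commute)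
    qed
  qed
  have "u = (\<lambda>n. x (int n))" by (simp add: u_def fun_eq_iff)
  then have om: "omega_set x = om u" using omega_om[of x] by simp
  have "om u \<in> ICT S f"
    unfolding ICT_def
    using om_sub[OF compact_imp_closed[OF assms(1)] uS] om_nonempty[OF assms(1) uS] om_closed
      om_ict[OF assms(1,2) uS pso] by blast
  then obtain z where z: "full_trajectory S f z" "alpha_set z = om u" "omega_set z = om u"
    using Pe unfolding property_Pe_def by blast
  show "\<exists>z. full_trajectory S f z \<and> alpha_set z = alpha_set x \<and> omega_set z = omega_set x"
    using z H om by auto
qed

lemma dense_seq:
  fixes A :: "'a::metric_space set"
  assumes "compact A" "A \<noteq> {}"
  shows "\<exists>e::nat \<Rightarrow> 'a. (\<forall>k. e k \<in> A) \<and> (\<forall>b\<in>A. \<forall>\<epsilon>>0. \<forall>M. \<exists>k\<ge>M. dist (e k) b < \<epsilon>)"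
proof -
  have net: "\<exists>F. F \<subseteq> A \<and> finite F \<and> A \<subseteq> (\<Union>c\<in>F. ball c r)" if r: "r > 0" for r
  proof -
    have cov: "A \<subseteq> (\<Union>c\<in>A. ball c r)" using r by auto
    show ?thesis
      by (rule compactE_image[OF assms(1) _ cov]) (simp, blast)
  qed
  have "\<exists>F. F \<subseteq> A \<and> finite F \<and> A \<subseteq> (\<Union>c\<in>F. ball c (1 / (real m + 1)))" for m
    using net[of "1 / (real m + 1)"] by simp
  then obtain F where F: "\<forall>m. F m \<subseteq> A \<and> finite (F m) \<and> A \<subseteq> (\<Union>c\<in>F m. ball c (1 / (real m + 1)))"
    by metis
  define D where "D = (\<Union>m. F m)"
  have Dc: "countable D" unfolding D_def using F by (intro countable_UN) (auto intro: countable_finite)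
  have DA: "D \<subseteq> A" using F by (auto simp: D_def)
  have "F 0 \<noteq> {}" using F assms(2) by blast
  then have Dne: "D \<noteq> {}" by (auto simp: D_def)
  define d where "d = from_nat_into D"
  have rd: "range d = D" using range_from_nat_into[OF Dne Dc] by (simp add: d_def)
  define e where "e k = d (fst (prod_decode k))" for k
  show ?thesis
  proof (intro exI[of _ e] conjI allI ballI impI)
    fix k show "e k \<in> A" using rd DA by (auto simp: e_def)
  next
    fix b \<epsilon> M assume b: "b \<in> A" and eps: "(\<epsilon>::real) > 0"
    obtain m :: nat where m: "1 / (real m + 1) < \<epsilon>"
      using eps by (metis nat_approx_posE of_nat_Suc add.commute)
    obtain c where c: "c \<in> F m" "b \<in> ball c (1 / (real m + 1))" using F b by blast
    have "c \<in> D" using c by (auto simp: D_def)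
    then obtain j where j: "d j = c" using rd by (metis imageE)
    define k where "k = prod_encode (j, M)"
    have "e k = c" by (simp add: e_def k_def j)
    moreover have "k \<ge> M" by (simp add: k_def le_prod_encode_2)
    moreover have "dist c b < \<epsilon>" using c m by (simp add: dist_commute)
    ultimately show "\<exists>k\<ge>M. dist (e k) b < \<epsilon>" by auto
  qed
qed

lemma dir2:
  fixes S :: "'a::metric_space set" and f :: "'a \<Rightarrow> 'a"
  assumes "compact S" and "continuous_on S f" and "f ` S \<subseteq> S"
    and G: "gamma_restricted_two_sided_orbital_limit_shadowing S f"
  shows "property_Pe S f"
  unfolding property_Pe_def
proof
  fix A assume "A \<in> ICT S f"
  then have AS: "A \<subseteq> S" and Ane: "A \<noteq> {}" and Acl: "closed A" and ict: "internally_chain_transitive f A"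
    by (auto simp: ICT_def)
  have "compact A" using compact_Int_closed[OF assms(1) Acl] AS by (simp add: Int_absorb1)
  then obtain e :: "nat \<Rightarrow> 'a" where eA: "\<forall>k. e k \<in> A" and ed: "\<forall>b\<in>A. \<forall>\<epsilon>>0. \<forall>M. \<exists>k\<ge>M. dist (e k) b < \<epsilon>"
    using dense_seq[OF \<open>compact A\<close> Ane] by blast
  have ch: "\<forall>a\<in>A. \<forall>b\<in>A. \<forall>\<delta>>0. \<exists>N::nat. \<exists>y::nat \<Rightarrow> 'a. N \<ge> 1 \<and> y 0 = a \<and> y N = b \<and>
        (\<forall>i\<le>N. y i \<in> A) \<and> (\<forall>i<N. dist (f (y i)) (y (Suc i)) < \<delta>)"
    using ict unfolding internally_chain_transitive_def .
  have pos: "1 / (real k + 1) > 0" for k by simp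
  have "\<forall>k. \<exists>N y. N \<ge> 1 \<and> y 0 = e k \<and> y N = e (Suc k) \<and>
        (\<forall>i\<le>N. y i \<in> A) \<and> (\<forall>i<N. dist (f (y i)) (y (Suc i)) < 1 / (real k + 1))"
  proof
    fix k show "\<exists>N y. N \<ge> 1 \<and> y 0 = e k \<and> y N = e (Suc k) \<and>
        (\<forall>i\<le>N. y i \<in> A) \<and> (\<forall>i<N. dist (f (y i)) (y (Suc i)) < 1 / (real k + 1))"
      using ch[rule_format, of "e k" "e (Suc k)" "1 / (real k + 1)"] eA pos[of k] by blast
  qed
  then obtain N1 c1 where C1: "\<forall>k. N1 k \<ge> 1 \<and> c1 k 0 = e k \<and> c1 k (N1 k) = e (Suc k) \<and>
        (\<forall>i\<le>N1 k. c1 k i \<in> A) \<and> (\<forall>i<N1 k. dist (f (c1 k i)) (c1 k (Suc i)) < 1 / (real k + 1))"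
    by metis
  have "\<forall>k. \<exists>N y. N \<ge> 1 \<and> y 0 = e (Suc k) \<and> y N = e k \<and>
        (\<forall>i\<le>N. y i \<in> A) \<and> (\<forall>i<N. dist (f (y i)) (y (Suc i)) < 1 / (real k + 1))"
  proof
    fix k show "\<exists>N y. N \<ge> 1 \<and> y 0 = e (Suc k) \<and> y N = e k \<and>
        (\<forall>i\<le>N. y i \<in> A) \<and> (\<forall>i<N. dist (f (y i)) (y (Suc i)) < 1 / (real k + 1))"
      using ch[rule_format, of "e (Suc k)" "e k" "1 / (real k + 1)"] eA pos[of k] by blast
  qed
  then obtain N2 c2 where C2: "\<forall>k. N2 k \<ge> 1 \<and> c2 k 0 = e (Suc k) \<and> c2 k (N2 k) = e k \<and>
        (\<forall>i\<le>N2 k. c2 k i \<in> A) \<and> (\<forall>i<N2 k. dist (f (c2 k i)) (c2 k (Suc i)) < 1 / (real k + 1))"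
    by metis
  obtain p where p: "\<forall>n. p n \<in> A" "\<forall>\<epsilon>>0. \<exists>n0. \<forall>n\<ge>n0. dist (f (p n)) (p (Suc n)) < \<epsilon>"
      "\<forall>k. \<exists>n\<ge>k. p n = c1 k 0"
    using concat_chains[of N1 c1 "\<lambda>u v. dist (f u) v" A] C1 by auto
  define c3 where "c3 k i = c2 k (N2 k - i)" for k i
  have C3: "\<forall>k. c3 k (N2 k) = c3 (Suc k) 0" using C2 by (simp add: c3_def)
  have C3e: "\<forall>k. \<forall>i<N2 k. dist (f (c3 k (Suc i))) (c3 k i) < 1 / (real k + 1)"
  proof (intro allI impI)
    fix k i assume i: "i < N2 k"
    then have "N2 k - i = Suc (N2 k - Suc i)" by simp
    moreover have "N2 k - Suc i < N2 k" using i by simp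
    ultimately show "dist (f (c3 k (Suc i))) (c3 k i) < 1 / (real k + 1)"
      using C2 by (simp add: c3_def)
  qed
  have C3A: "\<forall>k. \<forall>i\<le>N2 k. c3 k i \<in> A" using C2 by (simp add: c3_def)
  obtain q where q: "\<forall>n. q n \<in> A" "\<forall>\<epsilon>>0. \<exists>n0. \<forall>n\<ge>n0. dist (f (q (Suc n))) (q n) < \<epsilon>"
      "\<forall>k. \<exists>n\<ge>k. q n = c3 k 0"
    using concat_chains[of N2 c3 "\<lambda>u v. dist (f v) u" A] C2 C3 C3e C3A by auto
  have c30: "c3 k 0 = e k" for k using C2 by (simp add: c3_def)
  have c10: "c1 k 0 = e k" for k using C1 by simp
  define x where "x i = (if 0 \<le> i then p (nat i) else q (nat (- i - 1)))" for i
  have xA: "x i \<in> A" for i using p q by (simp add: x_def)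
  have top: "((\<lambda>i. dist (f (x i)) (x (i + 1))) \<longlongrightarrow> 0) at_top"
    unfolding tendsto_iff eventually_at_top_linorder
  proof (intro allI impI)
    fix \<epsilon> :: real assume "\<epsilon> > 0"
    then obtain n0 where n0: "\<forall>n\<ge>n0. dist (f (p n)) (p (Suc n)) < \<epsilon>" using p by blast
    show "\<exists>N. \<forall>i\<ge>N. dist (dist (f (x i)) (x (i + 1))) 0 < \<epsilon>"
    proof (intro exI[of _ "int n0"] allI impI)
      fix i assume i: "i \<ge> int n0"
      then have "nat (i + 1) = Suc (nat i)" "nat i \<ge> n0" by auto
      then show "dist (dist (f (x i)) (x (i + 1))) 0 < \<epsilon>" using n0 i by (simp add: x_def)
    qed
  qed
  have bot: "((\<lambda>i. dist (f (x i)) (x (i + 1))) \<longlongrightarrow> 0) at_bot"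
    unfolding tendsto_iff eventually_at_bot_linorder
  proof (intro allI impI)
    fix \<epsilon> :: real assume "\<epsilon> > 0"
    then obtain n0 where n0: "\<forall>n\<ge>n0. dist (f (q (Suc n))) (q n) < \<epsilon>" using q by blast
    show "\<exists>N. \<forall>i\<le>N. dist (dist (f (x i)) (x (i + 1))) 0 < \<epsilon>"
    proof (intro exI[of _ "- int n0 - 2"] allI impI)
      fix i assume i: "i \<le> - int n0 - 2"
      then have "nat (- i - 1) = Suc (nat (- (i + 1) - 1))" "nat (- (i + 1) - 1) \<ge> n0" by auto
      moreover have "\<not> 0 \<le> i" "\<not> 0 \<le> i + 1" using i by auto
      ultimately show "dist (dist (f (x i)) (x (i + 1))) 0 < \<epsilon>" using n0 by (simp add: x_def)
    qed
  qed
  have om: "omega_set x = A"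
  proof
    have "closure {x n | n. n > int 0} \<subseteq> A" using xA Acl by (intro closure_minimal) auto
    then show "omega_set x \<subseteq> A" unfolding omega_set_def by blast
  next
    show "A \<subseteq> omega_set x" unfolding omega_set_def
    proof (intro subsetI InterI, clarify)
      fix b M assume b: "b \<in> A"
      show "b \<in> closure {x n | n. n > int M}" unfolding closure_approachable
      proof (intro allI impI)
        fix \<epsilon> :: real assume "\<epsilon> > 0"
        then obtain k where k: "k \<ge> Suc M" "dist (e k) b < \<epsilon>" using ed b by blast
        obtain n where n: "n \<ge> k" "p n = e k" using p(3) c10 by metis
        have "x (int n) = e k" using n by (simp add: x_def)
        moreover have "int n > int M" using n k by simp
        ultimately have "x (int n) \<in> {x n | n. n > int M}" by blast
        then show "\<exists>y\<in>{x n | n. n > int M}. dist y b < \<epsilon>" using k \<open>x (int n) = e k\<close> by auto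
      qed
    qed
  qed
  have al: "alpha_set x = A"
  proof
    have "closure {x n | n. n < - int 0} \<subseteq> A" using xA Acl by (intro closure_minimal) auto
    then show "alpha_set x \<subseteq> A" unfolding alpha_set_def by blast
  next
    show "A \<subseteq> alpha_set x" unfolding alpha_set_def
    proof (intro subsetI InterI, clarify)
      fix b M assume b: "b \<in> A"
      show "b \<in> closure {x n | n. n < - int M}" unfolding closure_approachable
      proof (intro allI impI)
        fix \<epsilon> :: real assume "\<epsilon> > 0"
        then obtain k where k: "k \<ge> Suc M" "dist (e k) b < \<epsilon>" using ed b by blast
        obtain n where n: "n \<ge> k" "q n = e k" using q(3) c30 by metis
        have "x (- int n - 1) = e k" using n by (simp add: x_def)
        moreover have "- int n - 1 < - int M" using n k by simp
        ultimately have "x (- int n - 1) \<in> {x n | n. n < - int M}" by blast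
        then show "\<exists>y\<in>{x n | n. n < - int M}. dist y b < \<epsilon>" using k \<open>x (- int n - 1) = e k\<close> by auto
      qed
    qed
  qed
  have "two_sided_asymptotic_pseudo_orbit S f x"
    unfolding two_sided_asymptotic_pseudo_orbit_def using xA AS top bot by blast
  then obtain z where z: "full_trajectory S f z" "alpha_set z = alpha_set x" "omega_set z = omega_set x"
    using G om al unfolding gamma_restricted_two_sided_orbital_limit_shadowing_def by blast
  show "\<exists>z. full_trajectory S f z \<and> alpha_set z = A \<and> omega_set z = A"
    using z om al by blast
qed

theorem mainTheorem1:
  fixes S :: "'a::metric_space set" and f :: "'a \<Rightarrow> 'a"
  assumes "compact S" and "continuous_on S f" and "f ` S \<subseteq> S"
  shows "property_Pe S f \<longleftrightarrow> gamma_restricted_two_sided_orbital_limit_shadowing S f"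
  using dir1[OF assms] dir2[OF assms] by blast

end
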